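(* Let $\mathbb K$ be an odometer-based system and $\nu$ a shift-invariant Borel probability measure on $\mathbb K$. Then $\nu(S)=1$.
   Context: An odometer-based construction sequence over a finite alphabet $\Sigma$ with coefficients $k_n\ge 2$: $\mathcal W_0=\Sigma$, $\mathcal W_{n+1}\subseteq(\mathcal W_n)^{k_n}$ (concatenations of $k_n$ words of $\mathcal W_n$), each $\mathcal W_n$ uniquely readable (whenever $u,v,w\in\mathcal W_n$ and $uv=pws$ then $p$ or $s$ is empty), and each word of $\mathcal W_n$ occurs in each word of $\mathcal W_{n+1}$. $\mathbb K$ is the set of $x\in\Sigma^{\mathbb Z}$ all of whose finite subwords occur in a word of some $\mathcal W_n$, with the shift $sh(x)(i)=x(i+1)$. $S\subseteq\mathbb K$ is the set of $x$ for which there are sequences $a_m,b_m\to\infty$ of natural numbers such that for every $m$ there is an $n$ with $x\restriction[-a_m,b_m)\in\mathcal W_n$. *)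

theory Defs
  imports "HOL-Probability.Probability"
begin

definition borel_of :: "'a topology \<Rightarrow> 'a measure" where
  "borel_of T = sigma (topspace T) {U. openin T U}"

definition restr :: "(int \<Rightarrow> 'a) \<Rightarrow> int \<Rightarrow> int \<Rightarrow> 'a list" where
  "restr x a b = map x [a..b-1]"

definition odometer_based :: "'a set \<Rightarrow> (nat \<Rightarrow> nat) \<Rightarrow> (nat \<Rightarrow> 'a list set) \<Rightarrow> bool" where
  "odometer_based \<Sigma> k W \<longleftrightarrow>
     finite \<Sigma> \<and> \<Sigma> \<noteq> {} \<and>
     (\<forall>n. k n \<ge> 2) \<and>
     W 0 = {[a] | a. a \<in> \<Sigma>} \<and>
     (\<forall>n. W (Suc n) \<subseteq> {concat ws | ws. length ws = k n \<and> set ws \<subseteq> W n}) \<and>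
     (\<forall>n. \<forall>u\<in>W n. \<forall>v\<in>W n. \<forall>w\<in>W n. \<forall>p s. u @ v = p @ w @ s \<longrightarrow> p = [] \<or> s = []) \<and>
     (\<forall>n. \<forall>w\<in>W n. \<forall>v\<in>W (Suc n). \<exists>p s. v = p @ w @ s)"

definition sysK :: "'a set \<Rightarrow> (nat \<Rightarrow> 'a list set) \<Rightarrow> (int \<Rightarrow> 'a) set" where
  "sysK \<Sigma> W = {x. (\<forall>i. x i \<in> \<Sigma>) \<and>
     (\<forall>a b. a \<le> b \<longrightarrow> (\<exists>n. \<exists>w\<in>W n. \<exists>p s. w = p @ restr x a b @ s))}"

definition sh :: "(int \<Rightarrow> 'a) \<Rightarrow> (int \<Rightarrow> 'a)" where
  "sh x = (\<lambda>i. x (i + 1))"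

definition setS :: "'a set \<Rightarrow> (nat \<Rightarrow> 'a list set) \<Rightarrow> (int \<Rightarrow> 'a) set" where
  "setS \<Sigma> W = {x \<in> sysK \<Sigma> W. \<exists>a b :: nat \<Rightarrow> nat.
      filterlim a at_top sequentially \<and> filterlim b at_top sequentially \<and>
      (\<forall>m. \<exists>n. restr x (- int (a m)) (int (b m)) \<in> W n)}"

definition topK :: "'a set \<Rightarrow> (nat \<Rightarrow> 'a list set) \<Rightarrow> (int \<Rightarrow> 'a) topology" where
  "topK \<Sigma> W = subtopology (product_topology (\<lambda>_. discrete_topology \<Sigma>) UNIV) (sysK \<Sigma> W)"

end

theory Submission
  imports Defs
begin



lemma restr_alt: "restr x a b = map (\<lambda>i. x (a + int i)) [0..<nat (b - a)]"
proof (induction "nat (b - a)" arbitrary: a)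
  case 0
  then show ?case by (simp add: restr_def)
next
  case (Suc m)
  then have "a \<le> b - 1" by auto
  then have "restr x a b = x a # restr x (a+1) b" by (simp add: restr_def upto_rec1)
  moreover have "m = nat (b - (a+1))" using Suc(2) by auto
  moreover have "[0..<Suc m] = 0 # map Suc [0..<m]" by (simp add: map_Suc_upt upt_conv_Cons del: upt_Suc)
  ultimately show ?case using Suc(1)[of "a+1"] Suc(2)[symmetric] by (simp add: o_def add_ac)
qed

lemma length_restr[simp]: "length (restr x a b) = nat (b - a)"
  by (simp add: restr_alt)

lemma take_drop_map_upt: "d + l \<le> N \<Longrightarrow> take l (drop d (map f [0..<N])) = map (\<lambda>i. f (i + d)) [0..<l]"
proof -
  assume l: "d + l \<le> N"
  have "[d..<d+l] = map (\<lambda>i. i + d) [0..<l]" by (simp add: map_add_upt add.commute)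
  then show ?thesis using l by (simp add: drop_map take_map)
qed

lemma restr_take_drop:
  assumes "a + int d + int l \<le> b"
  shows "take l (drop d (restr x a b)) = restr x (a + int d) (a + int d + int l)"
proof -
  have l: "d + l \<le> nat (b - a)" using assms by linarith
  have "take l (drop d (restr x a b)) = map (\<lambda>i. x (a + int (i + d))) [0..<l]"
    unfolding restr_alt using take_drop_map_upt[OF l, of "\<lambda>i. x (a + int i)"] by simp
  also have "\<dots> = restr x (a + int d) (a + int d + int l)"
    unfolding restr_alt by (rule map_cong) (auto simp: add_ac)
  finally show ?thesis .
qed

lemma restr_sh: "restr (sh x) a b = restr x (a+1) (b+1)"
  unfolding restr_alt sh_def by (simp add: add_ac)

lemma restr_set: "set (restr x a b) \<subseteq> range x"
  unfolding restr_alt by auto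



primrec blen :: "(nat \<Rightarrow> nat) \<Rightarrow> nat \<Rightarrow> nat" where
  "blen k 0 = 1"
| "blen k (Suc n) = k n * blen k n"

locale odo =
  fixes \<Sigma> :: "'a set" and k :: "nat \<Rightarrow> nat" and W :: "nat \<Rightarrow> 'a list set"
  assumes ob: "odometer_based \<Sigma> k W"
begin

lemma k2: "k n \<ge> 2" using ob unfolding odometer_based_def by auto
lemma W0: "W 0 = {[a] | a. a \<in> \<Sigma>}" using ob unfolding odometer_based_def by auto
lemma WSuc: "w \<in> W (Suc n) \<Longrightarrow> \<exists>ws. w = concat ws \<and> length ws = k n \<and> set ws \<subseteq> W n"
  using ob unfolding odometer_based_def by blast
lemma UR: "u \<in> W n \<Longrightarrow> v \<in> W n \<Longrightarrow> w \<in> W n \<Longrightarrow> u @ v = p @ w @ s \<Longrightarrow> p = [] \<or> s = []"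
  using ob unfolding odometer_based_def by blast
lemma occ: "w \<in> W n \<Longrightarrow> v \<in> W (Suc n) \<Longrightarrow> \<exists>p s. v = p @ w @ s"
  using ob unfolding odometer_based_def by blast

lemma blen_pos: "blen k n > 0"
proof (induction n)
  case (Suc n)
  have "k n > 0" using k2[of n] by linarith
  then show ?case using Suc by simp
qed simp

lemma blen_ge: "blen k n \<ge> Suc n"
proof (induction n)
  case 0 then show ?case by simp
next
  case (Suc n)
  have "2 * blen k n \<le> k n * blen k n" using k2[of n] by simp
  then show ?case using Suc blen_pos[of n] by (simp only: blen.simps)
qed

lemma blen_less: "blen k n < blen k (Suc n)"
proof -
  have "2 * blen k n \<le> k n * blen k n" using k2[of n] by simp
  then show ?thesis using blen_pos[of n] by simp
qed

lemma blen_strict: "m < n \<Longrightarrow> blen k m < blen k n"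
  by (rule lift_Suc_mono_less[of "blen k"]) (use blen_less in auto)

lemma len_W: "w \<in> W n \<Longrightarrow> length w = blen k n"
proof (induction n arbitrary: w)
  case 0 then show ?case using W0 by auto
next
  case (Suc n)
  obtain ws where ws: "w = concat ws" "length ws = k n" "set ws \<subseteq> W n" using WSuc[OF Suc(2)] by blast
  have "length w = sum_list (map length ws)" using ws by (simp add: length_concat)
  also have "map length ws = map (\<lambda>_. blen k n) ws" using ws Suc.IH by (intro map_cong) auto
  also have "sum_list \<dots> = k n * blen k n" using ws by (simp add: sum_list_triv)
  finally show ?case by simp
qed

definition concats :: "nat \<Rightarrow> 'a list \<Rightarrow> bool" where
  "concats n w \<longleftrightarrow> (\<exists>ws. set ws \<subseteq> W n \<and> w = concat ws)"

lemma concats_append: "concats n u \<Longrightarrow> concats n v \<Longrightarrow> concats n (u @ v)"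
  unfolding concats_def by (metis concat_append set_append sup.boundedI)

lemma concats_concat: "(\<forall>u\<in>set us. concats n u) \<Longrightarrow> concats n (concat us)"
proof (induction us)
  case Nil then show ?case unfolding concats_def by (auto intro!: exI[of _ "[]"])
next
  case (Cons u us) then show ?case by (simp add: concats_append)
qed

lemma concat_W: "n \<le> m \<Longrightarrow> w \<in> W m \<Longrightarrow> concats n w"
proof (induction m arbitrary: w rule: dec_induct)
  case base then show ?case unfolding concats_def by (auto intro!: exI[of _ "[w]"])
next
  case (step m)
  obtain ws where ws: "w = concat ws" "set ws \<subseteq> W m" using WSuc[OF step.prems] by blast
  then show ?case using step.IH concats_concat by blast
qed

end



context odo begin

abbreviation "K n \<equiv> blen k n"

lemma align:
  assumes "set ws \<subseteq> W n" "w \<in> W n" "concat ws = p @ w @ s"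
  shows "K n dvd length p"
  using assms
proof (induction ws arbitrary: p)
  case Nil
  then show ?case using len_W[OF Nil(2)] blen_pos[of n] by auto
next
  case (Cons u ws)
  have lu: "length u = K n" using Cons(2) len_W by auto
  have lw: "length w = K n" using Cons(3) len_W by auto
  have eq: "u @ concat ws = p @ w @ s" using Cons(4) by simp
  consider "length p \<ge> K n" | "length p = 0" | "0 < length p \<and> length p < K n" by linarith
  then show ?case
  proof cases
    case 1
    have "concat ws = drop (K n) p @ w @ s"
      using arg_cong[OF eq, of "drop (K n)"] lu 1 by simp
    then have "K n dvd length (drop (K n) p)" using Cons by auto
    then have "K n dvd (length p - K n) + K n" by simp
    then show ?thesis using 1 by simp
  next
    case 2 then show ?thesis by simp
  next
    case 3
    show ?thesis
    proof (cases ws)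
      case Nil
      then have "length (u @ concat ws) = K n" using lu by simp
      moreover have "length (p @ w @ s) > K n" using 3 lw by simp
      ultimately show ?thesis using eq by simp
    next
      case (Cons v ws')
      have lv: "length v = K n" using Cons.prems(1) \<open>ws = v # ws'\<close> len_W by auto
      have "take (2 * K n) (u @ concat ws) = u @ v"
        using lu lv \<open>ws = v # ws'\<close> by simp
      moreover have "K n \<le> 2 * K n - length p" using 3 by linarith
      then have "take (2 * K n) (p @ w @ s) = p @ w @ take (2 * K n - length p - K n) s"
        using 3 lw by (simp add: take_append)
      ultimately have uv: "u @ v = p @ w @ take (2 * K n - length p - K n) s" using eq by simp
      have "p = [] \<or> take (2 * K n - length p - K n) s = []"
        using UR[OF _ _ _ uv] Cons.prems \<open>ws = v # ws'\<close> by auto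
      then have "s = []" using 3 by auto
      then have "length (p @ w @ s) < 2 * K n" using 3 lw by simp
      moreover have "length (u @ concat ws) \<ge> 2 * K n" using lu lv \<open>ws = v # ws'\<close> by simp
      ultimately show ?thesis using eq by simp
    qed
  qed
qed

lemma cover:
  assumes "set ws \<subseteq> W n" "concat ws = p @ r @ q" "length r \<ge> 2 * K n - 1"
  shows "\<exists>d < K n. d + K n \<le> length r \<and> take (K n) (drop d r) \<in> W n"
  using assms
proof (induction ws arbitrary: p)
  case Nil
  then show ?case using blen_pos[of n] by auto
next
  case (Cons u ws)
  have lu: "length u = K n" using Cons(2) len_W by auto
  have eq: "u @ concat ws = p @ r @ q" using Cons(3) by simp
  have Kp: "K n > 0" using blen_pos .
  consider "length p \<ge> K n" | "length p = 0" | "0 < length p \<and> length p < K n" by linarith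
  then show ?case
  proof cases
    case 1
    have "concat ws = drop (K n) p @ r @ q"
      using arg_cong[OF eq, of "drop (K n)"] lu 1 by simp
    then show ?thesis using Cons by auto
  next
    case 2
    then have "take (K n) (u @ concat ws) = take (K n) r" using eq Kp Cons(4) by (simp add: take_append)
    then have "take (K n) (drop 0 r) = u" using lu by simp
    then show ?thesis using Kp Cons(4) Cons(2) by (intro exI[of _ 0]) auto
  next
    case 3
    define d where "d = K n - length p"
    have dK: "d < K n" "d \<le> length r" using 3 Cons(4) unfolding d_def by auto
    have cw: "concat ws = drop d r @ q"
      using arg_cong[OF eq, of "drop (K n)"] lu 3 dK unfolding d_def by (simp add: drop_append)
    show ?thesis
    proof (cases ws)
      case Nil
      then have "drop d r = []" using cw by simp
      then have "length r \<le> d" by simp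
      then show ?thesis using dK Cons.prems(3) by linarith
    next
      case (Cons v ws')
      have lv: "length v = K n" using Cons.prems(1) \<open>ws = v # ws'\<close> len_W by auto
      have "K n \<le> length r - d" using dK Cons.prems(3) 3 unfolding d_def by linarith
      then have "length (drop d r) \<ge> K n" by simp
      have t1: "take (K n) (concat ws) = v" using \<open>ws = v # ws'\<close> lv by simp
      have t2: "take (K n) (concat ws) = take (K n) (drop d r)" using cw \<open>length (drop d r) \<ge> K n\<close> by simp
      have "take (K n) (drop d r) = v" using t1 t2 by simp
      moreover have "v \<in> W n" using Cons.prems(1) \<open>ws = v # ws'\<close> by auto
      ultimately show ?thesis using dK \<open>length (drop d r) \<ge> K n\<close> by (intro exI[of _ d]) auto
    qed
  qed
qed

end


context odo begin

lemma W_empty_Suc: "W n = {} \<Longrightarrow> W (Suc n) = {}"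
  using WSuc k2[of n] by fastforce

lemma W_empty_mono: "n \<le> m \<Longrightarrow> W n = {} \<Longrightarrow> W m = {}"
  by (induction m rule: dec_induct) (simp_all add: W_empty_Suc)

lemma W_nonempty:
  assumes "x \<in> sysK \<Sigma> W"
  shows "W m \<noteq> {}"
proof
  assume e: "W m = {}"
  from assms have "\<forall>a b. a \<le> b \<longrightarrow> (\<exists>n. \<exists>w\<in>W n. \<exists>p s. w = p @ restr x a b @ s)"
    unfolding sysK_def by blast
  then obtain n w p s where w: "w \<in> W n" "w = p @ restr x 0 (int (K m)) @ s"
    using of_nat_0_le_iff by blast
  have "length w \<ge> K m" using w by simp
  moreover have "length w = K n" by (rule len_W[OF w(1)])
  ultimately have "\<not> n < m" using blen_strict[of n m] by linarith
  then have "W n = {}" using W_empty_mono[OF _ e] by simp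
  then show False using w by simp
qed

lemma lift:
  assumes "x \<in> sysK \<Sigma> W" "a \<le> b"
  shows "\<exists>ws p s. set ws \<subseteq> W n \<and> concat ws = p @ restr x a b @ s"
proof -
  obtain m0 w p s where w: "w \<in> W m0" "w = p @ restr x a b @ s"
    using assms unfolding sysK_def by force
  have up: "\<exists>w\<in>W j. \<exists>p s. w = p @ restr x a b @ s" if "m0 \<le> j" for j
    using that
  proof (induction j rule: dec_induct)
    case base then show ?case using w by blast
  next
    case (step j)
    then obtain w p s where w: "w \<in> W j" "w = p @ restr x a b @ s" by blast
    obtain v where v: "v \<in> W (Suc j)" using W_nonempty[OF assms(1)] by blast
    obtain p' s' where "v = p' @ w @ s'" using occ[OF w(1) v] by blast
    then show ?case using v w by (intro bexI[of _ v] exI[of _ "p' @ p"] exI[of _ "s @ s'"]) auto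
  qed
  obtain w' p' s' where w': "w' \<in> W (max m0 n)" "w' = p' @ restr x a b @ s'" using up[of "max m0 n"] by auto
  obtain ws where "set ws \<subseteq> W n" "w' = concat ws"
    using concat_W[of n "max m0 n" w'] w' unfolding concats_def by auto
  then show ?thesis using w' by blast
qed

lemma cover_x:
  assumes "x \<in> sysK \<Sigma> W"
  shows "\<exists>s. - int (K n) < s \<and> s \<le> 0 \<and> restr x s (s + int (K n)) \<in> W n"
proof -
  define a where "a = 1 - int (K n)"
  define b where "b = int (K n)"
  have Kp: "K n > 0" by (rule blen_pos)
  have ab: "a \<le> b" unfolding a_def b_def using Kp by simp
  obtain ws p q where ws: "set ws \<subseteq> W n" "concat ws = p @ restr x a b @ q"
    using lift[OF assms ab, of n] by blast
  have lr: "length (restr x a b) = 2 * K n - 1" unfolding a_def b_def using Kp by simp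
  obtain d where d: "d < K n" "d + K n \<le> length (restr x a b)"
    "take (K n) (drop d (restr x a b)) \<in> W n"
    using cover[OF ws] lr by auto
  have "take (K n) (drop d (restr x a b)) = restr x (a + int d) (a + int d + int (K n))"
    using d(1) unfolding a_def b_def by (intro restr_take_drop) simp
  then show ?thesis using d unfolding a_def by (intro exI[of _ "a + int d"]) (auto simp: a_def)
qed

lemma disj_x:
  assumes "x \<in> sysK \<Sigma> W" "0 \<le> i" "i < j" "j < int (K n)"
    "restr x i (i + int (K n)) \<in> W n" "restr x j (j + int (K n)) \<in> W n"
  shows False
proof -
  define r where "r = restr x i (j + int (K n))"
  define d where "d = nat (j - i)"
  have d: "0 < d" "d < K n" "j = i + int d" using assms unfolding d_def by auto
  obtain ws p q where ws: "set ws \<subseteq> W n" "concat ws = p @ r @ q"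
    using lift[OF assms(1), of i "j + int (K n)" n] assms unfolding r_def by auto
  have lr: "length r = d + K n" unfolding r_def using d by simp
  have "take (K n) (drop 0 r) = restr x (i + int 0) (i + int 0 + int (K n))"
    unfolding r_def using d by (intro restr_take_drop) simp
  then have w1: "take (K n) r = restr x i (i + int (K n))" by simp
  have "take (K n) (drop d r) = restr x (i + int d) (i + int d + int (K n))"
    unfolding r_def using d by (intro restr_take_drop) simp
  then have w2: "take (K n) (drop d r) = restr x j (j + int (K n))" using d by simp
  have e1: "concat ws = p @ take (K n) r @ (drop (K n) r @ q)" using ws by simp
  define A where "A = take d r"
  define B where "B = take (K n) (drop d r)"
  define C where "C = drop (K n) (drop d r)"
  have "r = A @ B @ C" unfolding A_def B_def C_def by (simp only: append_take_drop_id)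
  then have e2: "concat ws = (p @ A) @ B @ (C @ q)"
    using ws by simp
  have "K n dvd length p" using align[OF ws(1) _ e1] w1 assms(5) by simp
  moreover have "K n dvd length (p @ A)" using align[OF ws(1) _ e2] w2 assms(6) unfolding B_def by simp
  moreover have "length A = d" unfolding A_def using lr by simp
  ultimately have "K n dvd d" by (simp add: dvd_add_right_iff)
  then show False using d by (simp add: nat_dvd_not_less)
qed

end



lemma restr_Cons: "a < b \<Longrightarrow> restr x a b = x a # restr x (a+1) b"
  unfolding restr_def by (simp add: upto_rec1)

lemma restr_empty: "b \<le> a \<Longrightarrow> restr x a b = []"
  by (simp add: restr_alt)

lemma restr_self: "restr x a (a + int (length (restr x a b))) = restr x a b"
  by (cases "a \<le> b") (auto simp: restr_empty)

locale odm = odo \<Sigma> k W for \<Sigma> :: "'a set" and k W +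
  fixes \<nu> :: "(int \<Rightarrow> 'a) measure"
  assumes sets_nu: "sets \<nu> = sets (borel_of (topK \<Sigma> W))"
    and space_nu: "space \<nu> = sysK \<Sigma> W"
    and prob: "prob_space \<nu>"
    and sh_meas: "sh \<in> measurable \<nu> \<nu>"
    and inv: "\<And>A. A \<in> sets \<nu> \<Longrightarrow> emeasure \<nu> (sh -` A \<inter> space \<nu>) = emeasure \<nu> A"
begin

interpretation P: prob_space \<nu> by (rule prob)

lemma top_space: "topspace (topK \<Sigma> W) = sysK \<Sigma> W"
  unfolding topK_def sysK_def by (auto simp: PiE_def extensional_def)

lemma coord: "{x \<in> space \<nu>. x i = c} \<in> sets \<nu>"
proof (cases "c \<in> \<Sigma>")
  case True
  have cm: "continuous_map (topK \<Sigma> W) (discrete_topology \<Sigma>) (\<lambda>x. x i)"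
    unfolding topK_def
    by (intro continuous_map_from_subtopology continuous_map_product_projection) simp
  have "openin (topK \<Sigma> W) {x \<in> topspace (topK \<Sigma> W). x i \<in> {c}}"
    by (rule openin_continuous_map_preimage[OF cm]) (use True in simp)
  then have o: "openin (topK \<Sigma> W) {x \<in> space \<nu>. x i = c}" using top_space space_nu by simp
  have "{x \<in> space \<nu>. x i = c} \<in> sigma_sets (topspace (topK \<Sigma> W)) {U. openin (topK \<Sigma> W) U}"
    using o by (rule sigma_sets.Basic[of _ "Collect (openin _)", simplified])
  moreover have "sets (borel_of (topK \<Sigma> W)) = sigma_sets (topspace (topK \<Sigma> W)) {U. openin (topK \<Sigma> W) U}"
    unfolding borel_of_def by (rule sets_measure_of) (auto dest: openin_subset)
  ultimately show ?thesis using sets_nu by simp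
next
  case False
  then have "{x \<in> space \<nu>. x i = c} = {}" using space_nu unfolding sysK_def by auto
  then show ?thesis by (metis sets.empty_sets)
qed

lemma cyl: "{x \<in> space \<nu>. restr x a (a + int (length w)) = w} \<in> sets \<nu>"
proof (induction w arbitrary: a)
  case Nil
  then show ?case by (simp add: restr_def)
next
  case (Cons c w)
  have "{x \<in> space \<nu>. restr x a (a + int (length (c # w))) = c # w} =
        {x \<in> space \<nu>. x a = c} \<inter> {x \<in> space \<nu>. restr x (a+1) (a + 1 + int (length w)) = w}"
    by (auto simp: restr_Cons add_ac)
  then show ?case using coord Cons.IH by simp
qed

lemma cylW: "{x \<in> space \<nu>. restr x a b \<in> A} \<in> sets \<nu>"
proof -
  define L where "L = {w. set w \<subseteq> \<Sigma> \<and> length w = nat (b - a)} \<inter> A"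
  have fin: "finite \<Sigma>" using ob unfolding odometer_based_def by simp
  have "finite L" unfolding L_def using finite_lists_length_eq[OF fin] by simp
  have "{x \<in> space \<nu>. restr x a b \<in> A} = (\<Union>w\<in>L. {x \<in> space \<nu>. restr x a (a + int (length w)) = w})"
  proof (intro equalityI subsetI)
    fix x assume x: "x \<in> {x \<in> space \<nu>. restr x a b \<in> A}"
    then have "set (restr x a b) \<subseteq> \<Sigma>" using space_nu restr_set[of x a b] unfolding sysK_def by auto
    then have "restr x a b \<in> L" using x unfolding L_def by simp
    then show "x \<in> (\<Union>w\<in>L. {x \<in> space \<nu>. restr x a (a + int (length w)) = w})"
      using x restr_self[of x a b] by blast
  next
    fix x assume "x \<in> (\<Union>w\<in>L. {x \<in> space \<nu>. restr x a (a + int (length w)) = w})"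
    then obtain w where w: "w \<in> L" "x \<in> space \<nu>" "restr x a (a + int (length w)) = w" by blast
    have "a + int (length w) = b \<or> (b < a \<and> w = [])" using w unfolding L_def by (auto simp: restr_empty)
    then have "restr x a b = w" using w by (auto simp: restr_empty)
    then show "x \<in> {x \<in> space \<nu>. restr x a b \<in> A}" using w unfolding L_def by auto
  qed
  then show ?thesis using \<open>finite L\<close> cyl by auto
qed

definition T :: "nat \<Rightarrow> int \<Rightarrow> (int \<Rightarrow> 'a) set" where
  "T n s = {x \<in> space \<nu>. restr x s (s + int (K n)) \<in> W n}"

lemma T_sets: "T n s \<in> sets \<nu>"
  unfolding T_def by (rule cylW)

lemma T_shift: "measure \<nu> (T n (s+1)) = measure \<nu> (T n s)"
proof -
  have "sh -` T n s \<inter> space \<nu> = T n (s+1)"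
    using measurable_space[OF sh_meas] unfolding T_def by (auto simp: restr_sh add_ac)
  then have "emeasure \<nu> (T n (s+1)) = emeasure \<nu> (T n s)" using inv[OF T_sets[of n s]] by metis
  then show ?thesis by (simp add: P.emeasure_eq_measure)
qed

lemma T_const: "measure \<nu> (T n s) = measure \<nu> (T n 0)"
proof (induction s rule: int_induct[of _ 0])
  case base then show ?case by simp
next
  case (step1 i) then show ?case using T_shift by simp
next
  case (step2 i) then show ?case using T_shift[of n "i - 1"] by simp
qed

lemma T_bound: "real (K n) * measure \<nu> (T n 0) \<le> 1"
proof -
  have disj: "disjoint_family_on (\<lambda>i. T n (int i)) {..<K n}"
    unfolding disjoint_family_on_def
  proof (intro ballI impI)
    fix i j assume ij: "i \<in> {..<K n}" "j \<in> {..<K n}" "i \<noteq> j"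
    show "T n (int i) \<inter> T n (int j) = {}"
    proof (rule ccontr)
      assume "T n (int i) \<inter> T n (int j) \<noteq> {}"
      then obtain x where x: "x \<in> T n (int i)" "x \<in> T n (int j)" by blast
      then have xs: "x \<in> sysK \<Sigma> W" unfolding T_def using space_nu by auto
      show False
      proof (cases "i < j")
        case True
        then show False using disj_x[OF xs, of "int i" "int j" n] x ij unfolding T_def by auto
      next
        case False
        then have "j < i" using ij by simp
        then show False using disj_x[OF xs, of "int j" "int i" n] x ij unfolding T_def by auto
      qed
    qed
  qed
  have "measure \<nu> (\<Union>i\<in>{..<K n}. T n (int i)) = (\<Sum>i\<in>{..<K n}. measure \<nu> (T n (int i)))"
    by (rule P.finite_measure_finite_Union) (use disj T_sets in auto)
  also have "\<dots> = (\<Sum>i\<in>{..<K n}. measure \<nu> (T n 0))" by (rule sum.cong[OF refl], rule T_const)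
  also have "\<dots> = real (K n) * measure \<nu> (T n 0)" by simp
  finally show ?thesis using P.prob_le_1 by metis
qed

end



context odm begin

interpretation P: prob_space \<nu> by (rule prob)

lemma setS_char: "x \<in> setS \<Sigma> W \<longleftrightarrow>
   x \<in> sysK \<Sigma> W \<and> (\<forall>N. \<exists>a\<ge>N. \<exists>b\<ge>N. \<exists>n. restr x (- int a) (int b) \<in> W n)"
proof
  assume "x \<in> setS \<Sigma> W"
  then have "x \<in> sysK \<Sigma> W \<and> (\<exists>a b :: nat \<Rightarrow> nat.
      filterlim a at_top sequentially \<and> filterlim b at_top sequentially \<and>
      (\<forall>m. \<exists>n. restr x (- int (a m)) (int (b m)) \<in> W n))"
    unfolding setS_def by (rule CollectD)
  then obtain a b where x: "x \<in> sysK \<Sigma> W" "filterlim a at_top sequentially"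
    "filterlim b at_top sequentially" "\<forall>m. \<exists>n. restr x (- int (a m)) (int (b m)) \<in> W n"
    by (elim conjE exE)
  have "\<exists>a\<ge>N. \<exists>b\<ge>N. \<exists>n. restr x (- int a) (int b) \<in> W n" for N
  proof -
    have "eventually (\<lambda>m. N \<le> a m) sequentially"
      using x(2) unfolding filterlim_at_top by blast
    moreover have "eventually (\<lambda>m. N \<le> b m) sequentially"
      using x(3) unfolding filterlim_at_top by blast
    ultimately have "eventually (\<lambda>m. N \<le> a m \<and> N \<le> b m) sequentially" by (rule eventually_conj)
    then obtain m where "N \<le> a m" "N \<le> b m" unfolding eventually_sequentially by blast
    moreover obtain n where "restr x (- int (a m)) (int (b m)) \<in> W n" using x(4) by blast
    ultimately show ?thesis by blast
  qed
  then show "x \<in> sysK \<Sigma> W \<and> (\<forall>N. \<exists>a\<ge>N. \<exists>b\<ge>N. \<exists>n. restr x (- int a) (int b) \<in> W n)"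
    using x(1) by blast
next
  assume r: "x \<in> sysK \<Sigma> W \<and> (\<forall>N. \<exists>a\<ge>N. \<exists>b\<ge>N. \<exists>n. restr x (- int a) (int b) \<in> W n)"
  have "\<exists>p. fst p \<ge> N \<and> snd p \<ge> N \<and> (\<exists>n. restr x (- int (fst p)) (int (snd p)) \<in> W n)" for N
  proof -
    obtain a b n where "a \<ge> N" "b \<ge> N" "restr x (- int a) (int b) \<in> W n" using r by blast
    then show ?thesis by (intro exI[of _ "(a,b)"]) auto
  qed
  then obtain f where f: "\<And>N. fst (f N) \<ge> N \<and> snd (f N) \<ge> N \<and> (\<exists>n. restr x (- int (fst (f N))) (int (snd (f N))) \<in> W n)"
    by metis
  have la: "filterlim (\<lambda>N. fst (f N)) at_top sequentially"
    by (rule filterlim_at_top_mono[OF filterlim_ident], rule always_eventually) (use f in blast)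
  have lb: "filterlim (\<lambda>N. snd (f N)) at_top sequentially"
    by (rule filterlim_at_top_mono[OF filterlim_ident], rule always_eventually) (use f in blast)
  have "\<forall>m. \<exists>n. restr x (- int (fst (f m))) (int (snd (f m))) \<in> W n" using f by blast
  then show "x \<in> setS \<Sigma> W" unfolding setS_def using r la lb
    by (intro CollectI conjI exI[of _ "\<lambda>N. fst (f N)"] exI[of _ "\<lambda>N. snd (f N)"]) auto
qed

lemma setS_sets: "setS \<Sigma> W \<in> sets \<nu>"
proof -
  have "setS \<Sigma> W = {x \<in> space \<nu>. \<forall>N::nat. \<exists>a::nat. N \<le> a \<and> (\<exists>b::nat. N \<le> b \<and> (\<exists>n::nat. restr x (- int a) (int b) \<in> W n))}"
    by (simp add: set_eq_iff setS_char space_nu)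
  also have "\<dots> \<in> sets \<nu>"
    by (intro sets.sets_Collect_countable_All sets.sets_Collect_countable_Ex sets.sets_Collect_conj
        sets.sets_Collect_const cylW)
  finally show ?thesis .
qed

definition I :: "nat \<Rightarrow> nat \<Rightarrow> int set" where
  "I N n = {s. - int (K n) < s \<and> s \<le> 0 \<and> (- int N < s \<or> s + int (K n) < int N)}"

definition Bad :: "nat \<Rightarrow> nat \<Rightarrow> (int \<Rightarrow> 'a) set" where
  "Bad N n = (\<Union>s\<in>I N n. T n s)"

lemma I_fin: "finite (I N n)"
  by (rule finite_subset[of _ "{- int (K n)<..0}"]) (auto simp: I_def)

lemma I_card: "card (I N n) \<le> 2 * N"
proof -
  have "I N n \<subseteq> {- int N<..0} \<union> {- int (K n)<..<int N - int (K n)}" unfolding I_def by auto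
  then have "card (I N n) \<le> card ({- int N<..0} \<union> {- int (K n)<..<int N - int (K n)})"
    by (intro card_mono) auto
  also have "\<dots> \<le> card {- int N<..0} + card {- int (K n)<..<int N - int (K n)}" by (rule card_Un_le)
  also have "\<dots> \<le> 2 * N" by simp
  finally show ?thesis .
qed

lemma Bad_sets: "Bad N n \<in> sets \<nu>"
  unfolding Bad_def using I_fin T_sets by auto

lemma Bad_measure: "measure \<nu> (Bad N n) \<le> 2 * real N / real (Suc n)"
proof -
  define t where "t = measure \<nu> (T n 0)"
  have t0: "0 \<le> t" unfolding t_def by simp
  have Kp: "real (K n) > 0" using blen_pos by simp
  have tK: "t \<le> 1 / real (K n)" using T_bound[of n] Kp unfolding t_def by (simp add: field_simps)
  have "measure \<nu> (Bad N n) \<le> (\<Sum>s\<in>I N n. measure \<nu> (T n s))"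
    unfolding Bad_def by (rule measure_UNION_le[OF I_fin]) (rule T_sets)
  also have "\<dots> = (\<Sum>s\<in>I N n. t)" unfolding t_def by (rule sum.cong[OF refl], rule T_const)
  also have "\<dots> = real (card (I N n)) * t" by simp
  also have "\<dots> \<le> real (2 * N) * t"
  proof -
    have "real (card (I N n)) \<le> real (2 * N)" using I_card[of N n] by (simp only: of_nat_le_iff)
    then show ?thesis using t0 by (rule mult_right_mono)
  qed
  also have "\<dots> \<le> real (2 * N) * (1 / real (K n))" using tK by (intro mult_left_mono) auto
  also have "\<dots> = 2 * real N / real (K n)" by simp
  also have "\<dots> \<le> 2 * real N / real (Suc n)"
    using blen_ge[of n] by (intro divide_left_mono) auto
  finally show ?thesis .
qed

definition B :: "nat \<Rightarrow> (int \<Rightarrow> 'a) set" where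
  "B N = (\<Inter>n. Bad N n)"

lemma B_null: "B N \<in> null_sets \<nu>"
proof -
  have Bs: "B N \<in> sets \<nu>" unfolding B_def using Bad_sets by auto
  have le: "measure \<nu> (B N) \<le> 2 * real N / real (Suc n)" for n
  proof -
    have "measure \<nu> (B N) \<le> measure \<nu> (Bad N n)"
      by (rule P.finite_measure_mono) (auto simp: B_def Bad_sets)
    then show ?thesis using Bad_measure[of N n] by linarith
  qed
  have "measure \<nu> (B N) = 0"
  proof (rule ccontr)
    assume "measure \<nu> (B N) \<noteq> 0"
    then have m: "measure \<nu> (B N) > 0" using measure_nonneg[of \<nu> "B N"] by linarith
    obtain n where n: "2 * real N / measure \<nu> (B N) < real n" using reals_Archimedean2 by blast
    then have "2 * real N < real n * measure \<nu> (B N)" using m by (simp add: field_simps)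
    also have "\<dots> \<le> real (Suc n) * measure \<nu> (B N)" using m by (intro mult_right_mono) auto
    finally have "2 * real N / real (Suc n) < measure \<nu> (B N)" by (simp add: field_simps)
    then show False using le[of n] by linarith
  qed
  then show ?thesis using Bs by (intro null_setsI) (simp_all add: P.emeasure_eq_measure)
qed

lemma compl_sub: "space \<nu> - setS \<Sigma> W \<subseteq> (\<Union>N. B N)"
proof
  fix x assume x: "x \<in> space \<nu> - setS \<Sigma> W"
  then have xs: "x \<in> sysK \<Sigma> W" "x \<in> space \<nu>" using space_nu by auto
  have "\<not> (\<forall>N. \<exists>a\<ge>N. \<exists>b\<ge>N. \<exists>n. restr x (- int a) (int b) \<in> W n)"
    using x xs(1) setS_char[of x] by simp
  then obtain N where N: "\<forall>a\<ge>N. \<forall>b\<ge>N. \<forall>n. restr x (- int a) (int b) \<notin> W n"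
    by auto
  have "x \<in> Bad N n" for n
  proof -
    obtain s where s: "- int (K n) < s" "s \<le> 0" "restr x s (s + int (K n)) \<in> W n"
      using cover_x[OF xs(1)] by blast
    have "s \<in> I N n"
    proof (rule ccontr)
      assume "s \<notin> I N n"
      then have h: "s \<le> - int N" "int N \<le> s + int (K n)" using s unfolding I_def by auto
      have "restr x (- int (nat (- s))) (int (nat (s + int (K n)))) \<in> W n" using s h by simp
      moreover have "nat (- s) \<ge> N" "nat (s + int (K n)) \<ge> N" using h by auto
      ultimately show False using N by blast
    qed
    moreover have "x \<in> T n s" unfolding T_def using xs s by simp
    ultimately show ?thesis unfolding Bad_def by blast
  qed
  then show "x \<in> (\<Union>N. B N)" unfolding B_def by blast
qed

lemma final: "emeasure \<nu> (setS \<Sigma> W) = 1"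
proof -
  have "(\<Union>N. B N) \<in> null_sets \<nu>" using B_null by blast
  then have "space \<nu> - setS \<Sigma> W \<in> null_sets \<nu>"
    by (rule null_sets_subset) (use compl_sub setS_sets in auto)
  then have "measure \<nu> (space \<nu> - setS \<Sigma> W) = 0"
    by (simp add: P.emeasure_eq_measure null_sets_def)
  then have "measure \<nu> (setS \<Sigma> W) = 1" using P.prob_compl[OF setS_sets] by simp
  then show ?thesis by (simp add: P.emeasure_eq_measure)
qed

end


theorem mainTheorem14:
  fixes \<Sigma> :: "'a set" and k :: "nat \<Rightarrow> nat" and W :: "nat \<Rightarrow> 'a list set"
    and \<nu> :: "(int \<Rightarrow> 'a) measure"
  assumes "odometer_based \<Sigma> k W"
    and "sets \<nu> = sets (borel_of (topK \<Sigma> W))"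
    and "space \<nu> = sysK \<Sigma> W"
    and "prob_space \<nu>"
    and "sh \<in> measurable \<nu> \<nu>"
    and "\<And>A. A \<in> sets \<nu> \<Longrightarrow> emeasure \<nu> (sh -` A \<inter> space \<nu>) = emeasure \<nu> A"
  shows "emeasure \<nu> (setS \<Sigma> W) = 1"
proof -
  interpret odm \<Sigma> k W \<nu>
    by (intro odm.intro odo.intro odm_axioms.intro) (use assms in auto)
  show ?thesis by (rule final)
qed

end
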